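(* Let $q$ be even and let $X$ be any (trace-class) operator on the $2^{n/2}$-dimensional Hilbert space of $n$ Majorana modes. Then \[ \binom{n}{q}^{-1} \sum_{I \in \binom{[n]}{q}} \left|\mathrm{tr}(\psi_I X)\right|^2 \leq 2\, \Delta(\mathcal{S}_q^n)\,(\mathrm{tr}|X|)^2. \]
   Context: Majorana operators $\psi_1,\dots,\psi_n$ are Hermitian operators on a Hilbert space of dimension $d=2^{n/2}$ with $\{\psi_i,\psi_j\}=\delta_{ij}$; for $I=\{i_1<\dots<i_q\}$, $\psi_I=i^{q/2}\psi_{i_1}\cdots\psi_{i_q}$ (a Hermitian operator). $\mathrm{tr}(\cdot)=d^{-1}\mathrm{Tr}(\cdot)$ is the normalized trace and $|X|=\sqrt{X^\dagger X}$. The commutation index of $\mathcal{S}_q^n=\{\psi_I: I\in\binom{[n]}{q}\}$ is $\Delta(\mathcal{S}_q^n)=\sup_\rho\binom{n}{q}^{-1}\sum_{I\in\binom{[n]}{q}}(\mathrm{Tr}(\psi_I\rho))^2$, the supremum over density matrices $\rho$. *)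

theory Defs
  imports "Jordan_Normal_Form.Schur_Decomposition"
begin

(* Un-normalized trace Tr and normalized trace tr = d^{-1} Tr of a square complex matrix *)
definition mTr :: "complex mat \<Rightarrow> complex" where
  "mTr A = (\<Sum>i<dim_row A. A $$ (i, i))"

definition ntr :: "complex mat \<Rightarrow> complex" where
  "ntr A = mTr A / of_nat (dim_row A)"

definition hermitian :: "complex mat \<Rightarrow> bool" where
  "hermitian A \<longleftrightarrow> A \<in> carrier_mat (dim_row A) (dim_row A) \<and> mat_adjoint A = A"

definition psd :: "complex mat \<Rightarrow> bool" where
  "psd A \<longleftrightarrow> hermitian A \<and>
     (\<forall>v \<in> carrier_vec (dim_row A). 0 \<le> (A *\<^sub>v v) \<bullet>c v)"

definition density :: "nat \<Rightarrow> complex mat \<Rightarrow> bool" where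
  "density d \<rho> \<longleftrightarrow> \<rho> \<in> carrier_mat d d \<and> psd \<rho> \<and> mTr \<rho> = 1"

definition mat_abs :: "complex mat \<Rightarrow> complex mat" where
  "mat_abs X = (THE P. P \<in> carrier_mat (dim_col X) (dim_col X) \<and> psd P \<and>
                        P * P = mat_adjoint X * X)"

(* psi_1..psi_n (indexed 0..n-1) are Majorana operators on a d-dimensional space *)
definition majorana :: "nat \<Rightarrow> nat \<Rightarrow> (nat \<Rightarrow> complex mat) \<Rightarrow> bool" where
  "majorana n d \<psi> \<longleftrightarrow>
     (\<forall>i<n. \<psi> i \<in> carrier_mat d d \<and> hermitian (\<psi> i)) \<and>
     (\<forall>i<n. \<forall>j<n. \<psi> i * \<psi> j + \<psi> j * \<psi> i = (if i = j then 1 else 0) \<cdot>\<^sub>m 1\<^sub>m d)"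

(* psi_I = i^{q/2} psi_{i_1} ... psi_{i_q}, i_1 < ... < i_q, q = |I|; i^{q/2} = e^{i pi q/4} *)
definition psiI :: "nat \<Rightarrow> (nat \<Rightarrow> complex mat) \<Rightarrow> nat set \<Rightarrow> complex mat" where
  "psiI d \<psi> I = cis (pi * real (card I) / 4) \<cdot>\<^sub>m
      foldr (\<lambda>i M. \<psi> i * M) (sorted_list_of_set I) (1\<^sub>m d)"

definition subsets_q :: "nat \<Rightarrow> nat \<Rightarrow> nat set set" where
  "subsets_q n q = {I. I \<subseteq> {0..<n} \<and> card I = q}"

definition comm_index :: "nat \<Rightarrow> nat \<Rightarrow> nat \<Rightarrow> (nat \<Rightarrow> complex mat) \<Rightarrow> real" where
  "comm_index n q d \<psi> = Sup {(1 / real (n choose q)) *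
       (\<Sum>I\<in>subsets_q n q. Re ((mTr (psiI d \<psi> I * \<rho>))\<^sup>2)) | \<rho>. density d \<rho>}"

end

theory Submission
  imports Defs "Jordan_Normal_Form.Spectral_Radius" "HOL-Analysis.L2_Norm"
begin


definition ip :: "nat \<Rightarrow> (nat\<Rightarrow>complex) \<Rightarrow> (nat\<Rightarrow>complex) \<Rightarrow> complex" where
  "ip d x y = (\<Sum>r<d. x r * cnj (y r))"
definition mv :: "nat \<Rightarrow> complex mat \<Rightarrow> (nat\<Rightarrow>complex) \<Rightarrow> (nat\<Rightarrow>complex)" where
  "mv d A x = (\<lambda>r. \<Sum>c<d. A$$(r,c) * x c)"
definition hm :: "nat \<Rightarrow> complex mat \<Rightarrow> bool" where
  "hm d A \<longleftrightarrow> (\<forall>i<d. \<forall>j<d. A$$(i,j) = cnj (A$$(j,i)))"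
definition orthon :: "nat \<Rightarrow> nat \<Rightarrow> (nat \<Rightarrow> nat \<Rightarrow> complex) \<Rightarrow> bool" where
  "orthon d k w \<longleftrightarrow> (\<forall>i<k. \<forall>j<k. ip d (w i) (w j) = (if i=j then 1 else 0))"

lemma mult_entry: "A \<in> carrier_mat d d \<Longrightarrow> B \<in> carrier_mat d d \<Longrightarrow> r<d \<Longrightarrow> c<d \<Longrightarrow>
  (A*B)$$(r,c) = (\<Sum>k<d. A$$(r,k) * B$$(k,c))"
  by (simp add: scalar_prod_def atLeast0LessThan)

lemma row_col: "A \<in> carrier_mat d d \<Longrightarrow> B \<in> carrier_mat d d \<Longrightarrow> r<d \<Longrightarrow> c<d \<Longrightarrow>
  row A r \<bullet> col B c = (\<Sum>k<d. A$$(r,k) * B$$(k,c))"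
  by (simp add: scalar_prod_def atLeast0LessThan)

lemma mv_mult: "A \<in> carrier_mat d d \<Longrightarrow> B \<in> carrier_mat d d \<Longrightarrow> r<d \<Longrightarrow>
  mv d (A*B) x r = mv d A (mv d B x) r"
proof -
  assume a: "A \<in> carrier_mat d d" "B \<in> carrier_mat d d" "r<d"
  have "mv d (A*B) x r = (\<Sum>c<d. \<Sum>k<d. A$$(r,k) * B$$(k,c) * x c)"
    unfolding mv_def using a by (simp add: row_col sum_distrib_right)
  also have "\<dots> = (\<Sum>k<d. \<Sum>c<d. A$$(r,k) * B$$(k,c) * x c)" by (rule sum.swap)
  also have "\<dots> = mv d A (mv d B x) r" unfolding mv_def by (simp add: sum_distrib_left mult.assoc)
  finally show ?thesis .
qed

lemma adj_carrier: "A \<in> carrier_mat m n \<Longrightarrow> mat_adjoint A \<in> carrier_mat n m"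
  unfolding mat_adjoint_def by auto

lemma adj_dims[simp]: "dim_row (mat_adjoint A) = dim_col A" "dim_col (mat_adjoint A) = dim_row A"
  unfolding mat_adjoint_def by auto

lemma adj_entry: "i < dim_col A \<Longrightarrow> j < dim_row A \<Longrightarrow> mat_adjoint A $$ (i,j) = cnj (A$$(j,i))"
  unfolding mat_adjoint_def by (simp add: mat_of_rows_index)

lemma ip_adj: "A \<in> carrier_mat d d \<Longrightarrow> ip d (mv d A x) y = ip d x (mv d (mat_adjoint A) y)"
proof -
  assume a: "A \<in> carrier_mat d d"
  have "ip d (mv d A x) y = (\<Sum>r<d. \<Sum>c<d. A$$(r,c) * x c * cnj (y r))"
    by (simp add: ip_def mv_def sum_distrib_right)
  also have "\<dots> = (\<Sum>c<d. \<Sum>r<d. A$$(r,c) * x c * cnj (y r))" by (rule sum.swap)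
  also have "\<dots> = (\<Sum>c<d. x c * (\<Sum>r<d. cnj (mat_adjoint A $$ (c,r) * y r)))"
    unfolding sum_distrib_left
  proof (rule sum.cong[OF refl], rule sum.cong[OF refl])
    fix c r assume "c \<in> {..<d}" "r \<in> {..<d}"
    with a show "A $$ (r, c) * x c * cnj (y r) = x c * cnj (mat_adjoint A $$ (c, r) * y r)"
      by (simp add: adj_entry)
  qed
  also have "\<dots> = ip d x (mv d (mat_adjoint A) y)"
    unfolding ip_def mv_def cnj_sum ..
  finally show ?thesis .
qed

lemma hm_adj: "hm d A \<Longrightarrow> ip d (mv d A x) y = ip d x (mv d A y)"
proof -
  assume a: "hm d A"
  have "ip d (mv d A x) y = (\<Sum>r<d. \<Sum>c<d. A$$(r,c) * x c * cnj (y r))"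
    by (simp add: ip_def mv_def sum_distrib_right)
  also have "\<dots> = (\<Sum>c<d. \<Sum>r<d. A$$(r,c) * x c * cnj (y r))" by (rule sum.swap)
  also have "\<dots> = (\<Sum>c<d. x c * (\<Sum>r<d. cnj (A $$ (c,r) * y r)))"
    unfolding sum_distrib_left
  proof (rule sum.cong[OF refl], rule sum.cong[OF refl])
    fix c r assume "c \<in> {..<d}" "r \<in> {..<d}"
    with a have "A $$ (r, c) = cnj (A $$ (c,r))" unfolding hm_def by blast
    thus "A $$ (r, c) * x c * cnj (y r) = x c * cnj (A $$ (c, r) * y r)"
      by simp
  qed
  also have "\<dots> = ip d x (mv d A y)"
    unfolding ip_def mv_def cnj_sum ..
  finally show ?thesis .
qed

lemma hermitian_hm: "hermitian A \<Longrightarrow> A \<in> carrier_mat d d \<Longrightarrow> hm d A"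
  unfolding hermitian_def hm_def
  by (metis adj_entry carrier_matD(1) carrier_matD(2) complex_cnj_cnj)

lemma ip_cnj: "cnj (ip d x y) = ip d y x"
  by (simp add: ip_def mult.commute)

lemma ip_self: "ip d x x = of_real (\<Sum>r<d. (cmod (x r))^2)"
  unfolding ip_def of_real_sum by (simp only: complex_norm_square)

lemma ip_self_ge: "0 \<le> Re (ip d x x)" "Im (ip d x x) = 0"
  by (simp_all add: ip_self sum_nonneg)

lemma ip_self_zero: "ip d x x = 0 \<Longrightarrow> r < d \<Longrightarrow> x r = 0"
proof -
  assume a: "ip d x x = 0" "r < d"
  hence "(\<Sum>r<d. (cmod (x r))^2) = 0" unfolding ip_self by (simp only: of_real_eq_0_iff)
  hence "\<forall>r\<in>{..<d}. (cmod (x r))^2 = 0" by (subst sum_nonneg_eq_0_iff[symmetric]) auto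
  with a show ?thesis by auto
qed

lemma ip_cong: "(\<And>r. r < d \<Longrightarrow> x r = x' r) \<Longrightarrow> (\<And>r. r < d \<Longrightarrow> y r = y' r) \<Longrightarrow> ip d x y = ip d x' y'"
  unfolding ip_def by (rule sum.cong) auto

lemma ip_scale_l: "ip d (\<lambda>r. a * x r) y = a * ip d x y"
  by (simp add: ip_def sum_distrib_left mult.assoc)
lemma ip_scale_r: "ip d x (\<lambda>r. a * y r) = cnj a * ip d x y"
  by (simp add: ip_def sum_distrib_left mult.assoc mult.left_commute)
lemma ip_sum_l: "ip d (\<lambda>r. \<Sum>j\<in>J. f j r) y = (\<Sum>j\<in>J. ip d (f j) y)"
proof -
  have "ip d (\<lambda>r. \<Sum>j\<in>J. f j r) y = (\<Sum>r<d. \<Sum>j\<in>J. f j r * cnj (y r))" by (simp add: ip_def sum_distrib_right)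
  also have "\<dots> = (\<Sum>j\<in>J. \<Sum>r<d. f j r * cnj (y r))" by (rule sum.swap)
  finally show ?thesis by (simp add: ip_def)
qed
lemma ip_sum_r: "ip d x (\<lambda>r. \<Sum>j\<in>J. f j r) = (\<Sum>j\<in>J. ip d x (f j))"
proof -
  have "ip d x (\<lambda>r. \<Sum>j\<in>J. f j r) = (\<Sum>r<d. \<Sum>j\<in>J. x r * cnj (f j r))" by (simp add: ip_def sum_distrib_left)
  also have "\<dots> = (\<Sum>j\<in>J. \<Sum>r<d. x r * cnj (f j r))" by (rule sum.swap)
  finally show ?thesis by (simp add: ip_def)
qed
lemma ip_diff_l: "ip d (\<lambda>r. x r - y r) z = ip d x z - ip d y z"
  unfolding ip_def left_diff_distrib by (rule sum_subtractf)
lemma ip_add_l: "ip d (\<lambda>r. x r + y r) z = ip d x z + ip d y z"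
  unfolding ip_def distrib_right by (rule sum.distrib)
lemma ip_add_r: "ip d z (\<lambda>r. x r + y r) = ip d z x + ip d z y"
  unfolding ip_def complex_cnj_add distrib_left by (rule sum.distrib)
lemma ip_diff_r: "ip d z (\<lambda>r. x r - y r) = ip d z x - ip d z y"
  unfolding ip_def complex_cnj_diff right_diff_distrib by (rule sum_subtractf)

lemma mv_sum: "mv d A (\<lambda>r. \<Sum>j\<in>J. f j r) r = (\<Sum>j\<in>J. mv d A (f j) r)"
  unfolding mv_def sum_distrib_left by (rule sum.swap)
lemma mv_scale: "mv d A (\<lambda>r. a * x r) r = a * mv d A x r"
  unfolding mv_def sum_distrib_left by (simp only: ac_simps)

lemma vec_ip: "v \<in> carrier_vec d \<Longrightarrow> A \<in> carrier_mat d d \<Longrightarrow>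
   (A *\<^sub>v v) \<bullet>c v = ip d (mv d A (\<lambda>i. v$i)) (\<lambda>i. v$i)"
  by (simp add: ip_def mv_def scalar_prod_def atLeast0LessThan)


lemma complete_onb: assumes o: "orthon d d w" and r: "r<d" and c: "c<d"
  shows "(\<Sum>i<d. w i r * cnj (w i c)) = (if r=c then 1 else 0)"
proof -
  define U where "U = mat d d (\<lambda>(r,i). w i r)"
  define V where "V = mat d d (\<lambda>(i,c). cnj (w i c))"
  have U: "U \<in> carrier_mat d d" and V: "V \<in> carrier_mat d d" unfolding U_def V_def by auto
  have "V * U = 1\<^sub>m d"
  proof (rule eq_matI)
    fix i j assume ij: "i < dim_row (1\<^sub>m d :: complex mat)" "j < dim_col (1\<^sub>m d :: complex mat)"
    hence "(V * U) $$ (i,j) = (\<Sum>t<d. cnj (w i t) * w j t)"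
      using U V by (simp add: U_def V_def scalar_prod_def atLeast0LessThan)
    also have "\<dots> = ip d (w j) (w i)" unfolding ip_def by (simp add: mult.commute)
    also have "\<dots> = (1\<^sub>m d :: complex mat) $$ (i,j)" using o ij unfolding orthon_def by auto
    finally show "(V * U) $$ (i,j) = (1\<^sub>m d :: complex mat) $$ (i,j)" .
  qed (use U V in auto)
  hence "U * V = 1\<^sub>m d" using mat_mult_left_right_inverse[OF V U] by simp
  hence "(U * V) $$ (r,c) = (1\<^sub>m d :: complex mat) $$ (r,c)" by simp
  thus ?thesis using r c U V by (simp add: U_def V_def scalar_prod_def atLeast0LessThan)
qed

lemma expand: assumes o: "orthon d d w" and r: "r<d"
  shows "x r = (\<Sum>i<d. ip d x (w i) * w i r)"
proof -
  have "(\<Sum>i<d. ip d x (w i) * w i r) = (\<Sum>i<d. \<Sum>c<d. x c * (w i r * cnj (w i c)))"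
    unfolding ip_def sum_distrib_right by (simp add: ac_simps)
  also have "\<dots> = (\<Sum>c<d. \<Sum>i<d. x c * (w i r * cnj (w i c)))" by (rule sum.swap)
  also have "\<dots> = (\<Sum>c<d. x c * (if r = c then 1 else 0))"
    unfolding sum_distrib_left[symmetric] using complete_onb[OF o r] by simp
  also have "\<dots> = (\<Sum>c<d. if c = r then x r else 0)" by (rule sum.cong) auto
  also have "\<dots> = x r" using r by simp
  finally show ?thesis by simp
qed

lemma zero_by_ip: "orthon d d w \<Longrightarrow> (\<And>i. i<d \<Longrightarrow> ip d x (w i) = 0) \<Longrightarrow> r<d \<Longrightarrow> x r = 0"
  using expand[of d w r x] by simp

lemma ip_delta: "c < d \<Longrightarrow> ip d (\<lambda>t. if t = c then 1 else 0) y = cnj (y c)"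
proof -
  assume c: "c < d"
  have "ip d (\<lambda>t. if t = c then 1 else 0) y = (\<Sum>r<d. if r = c then cnj (y c) else 0)"
    unfolding ip_def by (rule sum.cong) auto
  thus ?thesis using c by simp
qed

lemma normalize: assumes "ip d y y \<noteq> 0"
  shows "ip d (\<lambda>r. complex_of_real (1 / sqrt (Re (ip d y y))) * y r)
                (\<lambda>r. complex_of_real (1 / sqrt (Re (ip d y y))) * y r) = 1"
proof -
  define nn where "nn = Re (ip d y y)"
  have e: "ip d y y = of_real nn" using ip_self_ge(2)[of d y] unfolding nn_def by (simp add: complex_eq_iff)
  have "nn \<noteq> 0" using assms e by auto
  moreover have "nn \<ge> 0" using ip_self_ge(1)[of d y] nn_def by simp
  ultimately have p: "nn > 0" by simp
  show ?thesis unfolding ip_scale_l ip_scale_r nn_def[symmetric] e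
    using p by (simp add: field_simps flip: of_real_mult)
qed

lemma ext1: assumes o: "orthon d k w" and k: "k<d"
  shows "\<exists>u. ip d u u = 1 \<and> (\<forall>i<k. ip d u (w i) = 0)"
proof -
  have "\<not>(\<forall>r<d. \<forall>c<d. (\<Sum>i<k. w i r * cnj (w i c)) = (if r=c then 1 else 0))"
  proof
    assume H: "\<forall>r<d. \<forall>c<d. (\<Sum>i<k. w i r * cnj (w i c)) = (if r=c then 1 else 0)"
    have "(of_nat d :: complex) = (\<Sum>r<d. \<Sum>i<k. w i r * cnj (w i r))" using H by simp
    also have "\<dots> = (\<Sum>i<k. \<Sum>r<d. w i r * cnj (w i r))" by (rule sum.swap)
    also have "\<dots> = (\<Sum>i<k. ip d (w i) (w i))" unfolding ip_def ..
    also have "\<dots> = of_nat k" using o unfolding orthon_def by simp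
    finally show False using k by simp
  qed
  then obtain r c where r: "r<d" and c: "c<d" and ne: "(\<Sum>i<k. w i r * cnj (w i c)) \<noteq> (if r=c then 1 else 0)"
    by blast
  define u0 where "u0 = (\<lambda>t. (if t = c then 1 else 0) - (\<Sum>i<k. cnj (w i c) * w i t))"
  have "u0 r \<noteq> 0" using ne unfolding u0_def by (simp add: mult.commute)
  hence nz: "ip d u0 u0 \<noteq> 0" using ip_self_zero r by blast
  have orth: "ip d u0 (w m) = 0" if m: "m<k" for m
  proof -
    have "ip d u0 (w m) = cnj (w m c) - (\<Sum>i<k. cnj (w i c) * ip d (w i) (w m))"
      unfolding u0_def ip_diff_l ip_sum_l ip_scale_l ip_delta[OF c] ..
    also have "(\<Sum>i<k. cnj (w i c) * ip d (w i) (w m)) = (\<Sum>i<k. if i = m then cnj (w i c) else 0)"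
      using o m unfolding orthon_def by (intro sum.cong) auto
    also have "\<dots> = cnj (w m c)" using m by simp
    finally show ?thesis by simp
  qed
  define a where "a = complex_of_real (1 / sqrt (Re (ip d u0 u0)))"
  have "ip d (\<lambda>r. a * u0 r) (w i) = 0" if "i<k" for i
    unfolding ip_scale_l using orth[OF that] by simp
  thus ?thesis using normalize[OF nz, folded a_def] by blast
qed

lemma orthon_upd: assumes "orthon d k w" "ip d u u = 1" "\<forall>i<k. ip d u (w i) = 0"
  shows "orthon d (Suc k) (w(k:=u))"
proof -
  have "ip d (w i) u = 0" if "i<k" for i using assms(3) that ip_cnj[of d u "w i"] by auto
  thus ?thesis using assms unfolding orthon_def by (auto simp: less_Suc_eq)
qed

lemma ext_full: "orthon d k w \<Longrightarrow> k \<le> d \<Longrightarrow> \<exists>b. orthon d d b \<and> (\<forall>i<k. b i = w i)"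
proof (induction "d - k" arbitrary: k w)
  case 0
  hence "k = d" by simp
  thus ?case using 0 by blast
next
  case (Suc x)
  hence k: "k < d" by simp
  obtain u where u: "ip d u u = 1" "\<forall>i<k. ip d u (w i) = 0" using ext1[OF Suc.prems(1) k] by blast
  have "orthon d (Suc k) (w(k:=u))" using orthon_upd[OF Suc.prems(1) u] .
  moreover have "x = d - Suc k" using Suc.hyps(2) by simp
  ultimately obtain b where "orthon d d b" "\<forall>i<Suc k. b i = (w(k:=u)) i"
    using Suc.hyps(1) k by (metis Suc_leI)
  thus ?case by auto
qed

lemma eig_exists: assumes M: "(M :: complex mat) \<in> carrier_mat m m" and m: "0 < m"
  shows "\<exists>\<mu> z. z \<in> carrier_vec m \<and> z \<noteq> 0\<^sub>v m \<and> M *\<^sub>v z = \<mu> \<cdot>\<^sub>v z"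
proof -
  from spectrum_non_empty[OF M m] obtain e where "e \<in> spectrum M" by blast
  then obtain v where "eigenvector M v e" unfolding spectrum_def eigenvalue_def by auto
  thus ?thesis unfolding eigenvector_def using M by auto
qed


lemma step_eig: assumes h: "hm d A" and o: "orthon d k w" and k: "k<d"
  and ev: "\<forall>i<k. \<forall>r<d. mv d A (w i) r = lam i * w i r"
  shows "\<exists>y mu. ip d y y = 1 \<and> (\<forall>i<k. ip d y (w i) = 0) \<and> (\<forall>r<d. mv d A y r = mu * y r)"
proof -
  obtain b where b: "orthon d d b" and bw: "\<forall>i<k. b i = w i" using ext_full[OF o] k by auto
  define m where "m = d - k"
  have m: "0 < m" using k m_def by simp
  define M where "M = mat m m (\<lambda>(l,j). ip d (mv d A (b (k+j))) (b (k+l)))"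
  have Mc: "M \<in> carrier_mat m m" unfolding M_def by simp
  obtain \<mu> z where z: "z \<in> carrier_vec m" "z \<noteq> 0\<^sub>v m" and Mz: "M *\<^sub>v z = \<mu> \<cdot>\<^sub>v z"
    using eig_exists[OF Mc m] by blast
  define y0 where "y0 = (\<lambda>r. \<Sum>j<m. z$j * b (k+j) r)"
  have bo: "ip d (b i) (b j) = (if i = j then 1 else 0)" if "i<d" "j<d" for i j
    using b that unfolding orthon_def by auto
  have f1: "ip d y0 (b (k+l)) = z$l" if l: "l<m" for l
  proof -
    have "ip d y0 (b (k+l)) = (\<Sum>j<m. z$j * ip d (b (k+j)) (b (k+l)))"
      unfolding y0_def ip_sum_l ip_scale_l ..
    also have "\<dots> = (\<Sum>j<m. if j = l then z$l else 0)"
      using l m_def by (intro sum.cong) (auto simp: bo)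
    finally show ?thesis using l by simp
  qed
  have f2: "ip d y0 (b i) = 0" if i: "i<k" for i
  proof -
    have "ip d y0 (b i) = (\<Sum>j<m. z$j * ip d (b (k+j)) (b i))"
      unfolding y0_def ip_sum_l ip_scale_l ..
    also have "\<dots> = 0"
      using i k m_def by (intro sum.neutral) (auto simp: bo)
    finally show ?thesis .
  qed
  have f3: "ip d (mv d A y0) (b i) = 0" if i: "i<k" for i
  proof -
    have "ip d (mv d A y0) (b i) = ip d y0 (mv d A (b i))" by (rule hm_adj[OF h])
    also have "\<dots> = ip d y0 (\<lambda>r. lam i * b i r)"
      using ev i bw by (intro ip_cong) auto
    also have "\<dots> = 0" unfolding ip_scale_r using f2[OF i] by simp
    finally show ?thesis .
  qed
  have f4: "ip d (mv d A y0) (b (k+l)) = \<mu> * z$l" if l: "l<m" for l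
  proof -
    have "ip d (mv d A y0) (b (k+l)) = ip d (\<lambda>r. \<Sum>j<m. z$j * mv d A (b (k+j)) r) (b (k+l))"
      unfolding y0_def mv_sum mv_scale ..
    also have "\<dots> = (\<Sum>j<m. M $$ (l,j) * z$j)"
      unfolding ip_sum_l ip_scale_l M_def using l by (intro sum.cong) auto
    also have "\<dots> = (M *\<^sub>v z) $ l" using Mc z l by (simp add: scalar_prod_def atLeast0LessThan ac_simps)
    also have "\<dots> = \<mu> * z$l" using Mz z l by simp
    finally show ?thesis .
  qed
  have eq: "mv d A y0 r = \<mu> * y0 r" if r: "r<d" for r
  proof -
    have "(\<lambda>r. mv d A y0 r - \<mu> * y0 r) r = 0"
    proof (rule zero_by_ip[OF b _ r])
      fix i assume i: "i<d"
      show "ip d (\<lambda>r. mv d A y0 r - \<mu> * y0 r) (b i) = 0"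
      proof (cases "i<k")
        case True thus ?thesis unfolding ip_diff_l ip_scale_l using f2 f3 by simp
      next
        case False
        define l where "l = i - k"
        have il: "i = k + l" "l < m" using False i unfolding m_def l_def by auto
        show ?thesis unfolding ip_diff_l ip_scale_l il(1) using f1[OF il(2)] f4[OF il(2)] by simp
      qed
    qed
    thus ?thesis by simp
  qed
  have "\<exists>l<m. z$l \<noteq> 0"
  proof (rule ccontr)
    assume "\<not> (\<exists>l<m. z$l \<noteq> 0)"
    hence "z = 0\<^sub>v m" using z(1) by (intro eq_vecI) auto
    thus False using z(2) by simp
  qed
  then obtain l where l: "l<m" "z$l \<noteq> 0" by blast
  have nz: "ip d y0 y0 \<noteq> 0"
  proof
    assume "ip d y0 y0 = 0"
    hence "\<forall>r<d. y0 r = 0" using ip_self_zero by blast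
    hence "ip d y0 (b (k+l)) = 0" unfolding ip_def by simp
    thus False using f1 l by simp
  qed
  define a where "a = complex_of_real (1 / sqrt (Re (ip d y0 y0)))"
  have "ip d (\<lambda>r. a * y0 r) (w i) = 0" if "i<k" for i
    unfolding ip_scale_l using f2[OF that] bw that by simp
  moreover have "mv d A (\<lambda>r. a * y0 r) r = \<mu> * (a * y0 r)" if "r<d" for r
    unfolding mv_scale using eq[OF that] by simp
  ultimately show ?thesis using normalize[OF nz, folded a_def] by blast
qed

lemma spectral_k: assumes h: "hm d A"
  shows "k \<le> d \<Longrightarrow> \<exists>w lam. orthon d k w \<and> (\<forall>i<k. \<forall>r<d. mv d A (w i) r = lam i * w i r)"
proof (induction k)
  case 0
  show ?case unfolding orthon_def by auto
next
  case (Suc k)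
  then obtain w lam where o: "orthon d k w" and ev: "\<forall>i<k. \<forall>r<d. mv d A (w i) r = lam i * w i r"
    by auto
  obtain y mu where y: "ip d y y = 1" "\<forall>i<k. ip d y (w i) = 0" "\<forall>r<d. mv d A y r = mu * y r"
    using step_eig[OF h o _ ev] Suc.prems by auto
  have "orthon d (Suc k) (w(k:=y))" using orthon_upd[OF o y(1,2)] .
  moreover have "\<forall>i<Suc k. \<forall>r<d. mv d A ((w(k:=y)) i) r = (lam(k:=mu)) i * (w(k:=y)) i r"
    using ev y(3) by (auto simp: less_Suc_eq)
  ultimately show ?case by blast
qed

lemma spectral: "hm d A \<Longrightarrow> \<exists>w lam. orthon d d w \<and> (\<forall>i<d. \<forall>r<d. mv d A (w i) r = lam i * w i r)"
  using spectral_k[of d A d] by simp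


lemma mv_cong: "(\<And>r. r<d \<Longrightarrow> x r = x' r) \<Longrightarrow> mv d A x r = mv d A x' r"
  unfolding mv_def by (rule sum.cong) auto

lemma mat_eq_by_basis: assumes o: "orthon d d w" and A: "A \<in> carrier_mat d d" and B: "B \<in> carrier_mat d d"
  and e: "\<And>i r. i<d \<Longrightarrow> r<d \<Longrightarrow> mv d A (w i) r = mv d B (w i) r"
  shows "A = B"
proof (rule eq_matI)
  have key: "C $$ (r,c) = (\<Sum>i<d. cnj (w i c) * mv d C (w i) r)" if "r<d" "c<d" for C r c
  proof -
    define ec where "ec = (\<lambda>t. if t = c then (1::complex) else 0)"
    have "C $$ (r,c) = mv d C ec r" unfolding mv_def ec_def using that
      by (simp add: if_distrib cong: if_cong)
    also have "\<dots> = mv d C (\<lambda>t. \<Sum>i<d. ip d ec (w i) * w i t) r"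
      by (rule mv_cong) (use expand[OF o] in auto)
    also have "\<dots> = (\<Sum>i<d. cnj (w i c) * mv d C (w i) r)"
      unfolding mv_sum mv_scale ec_def ip_delta[OF that(2)] ..
    finally show ?thesis .
  qed
  fix r c assume "r < dim_row B" "c < dim_col B"
  hence rc: "r<d" "c<d" using B by auto
  show "A $$ (r,c) = B $$ (r,c)" unfolding key[OF rc] key[OF rc, of B] using e rc by simp
qed (use A B in auto)

lemma psd_fun: assumes "psd Q" "Q \<in> carrier_mat d d"
  shows "hm d Q" "0 \<le> ip d (mv d Q x) x"
proof -
  show "hm d Q" using assms hermitian_hm unfolding psd_def by blast
  define v where "v = vec d x"
  have v: "v \<in> carrier_vec d" unfolding v_def by simp
  have "0 \<le> (Q *\<^sub>v v) \<bullet>c v" using assms v unfolding psd_def by auto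
  also have "(Q *\<^sub>v v) \<bullet>c v = ip d (mv d Q (\<lambda>i. v$i)) (\<lambda>i. v$i)" by (rule vec_ip[OF v assms(2)])
  also have "\<dots> = ip d (mv d Q x) x"
    by (rule ip_cong) (auto simp: v_def intro!: mv_cong)
  finally show "0 \<le> ip d (mv d Q x) x" .
qed

lemma psd_from_fun: assumes "Q \<in> carrier_mat d d" "mat_adjoint Q = Q" "\<And>x. 0 \<le> ip d (mv d Q x) x"
  shows "psd Q"
  unfolding psd_def hermitian_def
proof (intro conjI ballI)
  show "Q \<in> carrier_mat (dim_row Q) (dim_row Q)" using assms by auto
  show "mat_adjoint Q = Q" by fact
  fix v :: "complex vec" assume "v \<in> carrier_vec (dim_row Q)"
  hence v: "v \<in> carrier_vec d" using assms by auto
  show "0 \<le> (Q *\<^sub>v v) \<bullet>c v" unfolding vec_ip[OF v assms(1)] by (rule assms(3))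
qed

lemma hm_gram: assumes X: "X \<in> carrier_mat d d"
  shows "hm d (mat_adjoint X * X)"
proof -
  have A: "mat_adjoint X \<in> carrier_mat d d" using adj_carrier[OF X] .
  show ?thesis unfolding hm_def
  proof (intro allI impI)
    fix i j assume ij: "i<d" "j<d"
    show "(mat_adjoint X * X) $$ (i, j) = cnj ((mat_adjoint X * X) $$ (j, i))"
      unfolding mult_entry[OF A X ij] mult_entry[OF A X ij(2,1)] cnj_sum using X ij
      by (intro sum.cong) (auto simp: adj_entry)
  qed
qed

lemma ip_gram: assumes X: "X \<in> carrier_mat d d"
  shows "ip d (mv d X x) (mv d X y) = ip d x (mv d (mat_adjoint X * X) y)"
proof -
  have A: "mat_adjoint X \<in> carrier_mat d d" using adj_carrier[OF X] .
  have "ip d (mv d X x) (mv d X y) = ip d x (mv d (mat_adjoint X) (mv d X y))" by (rule ip_adj[OF X])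
  also have "\<dots> = ip d x (mv d (mat_adjoint X * X) y)"
    by (rule ip_cong) (auto simp: mv_mult[OF A X])
  finally show ?thesis .
qed

lemma trace_basis: assumes o: "orthon d d w" and B: "B \<in> carrier_mat d d"
  shows "mTr B = (\<Sum>i<d. ip d (mv d B (w i)) (w i))"
proof -
  have "(\<Sum>i<d. ip d (mv d B (w i)) (w i)) = (\<Sum>i<d. \<Sum>r<d. \<Sum>c<d. B$$(r,c) * (w i c * cnj (w i r)))"
    unfolding ip_def mv_def sum_distrib_right by (simp add: ac_simps)
  also have "\<dots> = (\<Sum>r<d. \<Sum>i<d. \<Sum>c<d. B$$(r,c) * (w i c * cnj (w i r)))" by (rule sum.swap)
  also have "\<dots> = (\<Sum>r<d. \<Sum>c<d. \<Sum>i<d. B$$(r,c) * (w i c * cnj (w i r)))"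
    by (rule sum.cong[OF refl]) (rule sum.swap)
  also have "\<dots> = (\<Sum>r<d. \<Sum>c<d. B$$(r,c) * (if c = r then 1 else 0))"
    unfolding sum_distrib_left[symmetric] using complete_onb[OF o] by simp
  also have "\<dots> = (\<Sum>r<d. B$$(r,r))"
  proof (rule sum.cong[OF refl])
    fix r assume r: "r \<in> {..<d}"
    have "(\<Sum>c<d. B$$(r,c) * (if c = r then 1 else 0)) = (\<Sum>c<d. if c = r then B$$(r,r) else 0)"
      by (rule sum.cong) auto
    thus "(\<Sum>c<d. B$$(r,c) * (if c = r then 1 else 0)) = B$$(r,r)" using r by simp
  qed
  finally show ?thesis unfolding mTr_def using B by simp
qed


lemma mv_diff: "mv d A (\<lambda>r. x r - y r) r = mv d A x r - mv d A y r"
  unfolding mv_def right_diff_distrib by (rule sum_subtractf)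

lemma cle_real: "(0::complex) \<le> of_real a \<longleftrightarrow> 0 \<le> a"
  by (simp add: less_eq_complex_def)

lemma abs_decomp: assumes X: "X \<in> carrier_mat d d"
  shows "\<exists>w s. orthon d d w \<and> (\<forall>i. 0 \<le> s i) \<and>
     (\<forall>i<d. ip d (mv d X (w i)) (mv d X (w i)) = of_real ((s i)^2)) \<and>
     mTr (mat_abs X) = of_real (\<Sum>i<d. s i) \<and> mat_abs X \<in> carrier_mat d d"
proof -
  define M where "M = mat_adjoint X * X"
  have A: "mat_adjoint X \<in> carrier_mat d d" using adj_carrier[OF X] .
  have Mc: "M \<in> carrier_mat d d" unfolding M_def using A X by simp
  obtain w lam where o: "orthon d d w" and ev: "\<forall>i<d. \<forall>r<d. mv d M (w i) r = lam i * w i r"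
    using spectral[OF hm_gram[OF X]] unfolding M_def by blast
  have wo: "ip d (w i) (w j) = (if i = j then 1 else 0)" if "i<d" "j<d" for i j
    using o that unfolding orthon_def by auto
  define s where "s = (\<lambda>i. sqrt (Re (ip d (mv d X (w i)) (mv d X (w i)))))"
  have s0: "\<forall>i. 0 \<le> s i" unfolding s_def using ip_self_ge(1) by simp
  have ips: "ip d (mv d X (w i)) (mv d X (w i)) = of_real ((s i)^2)" for i
    unfolding s_def using ip_self_ge[of d "mv d X (w i)"] by (simp add: complex_eq_iff)
  have lam: "lam i = of_real ((s i)^2)" if i: "i<d" for i
  proof -
    have "ip d (mv d X (w i)) (mv d X (w i)) = ip d (w i) (mv d M (w i))"
      unfolding M_def by (rule ip_gram[OF X])
    also have "\<dots> = ip d (w i) (\<lambda>r. lam i * w i r)" using ev i by (intro ip_cong) auto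
    also have "\<dots> = cnj (lam i)" unfolding ip_scale_r using wo[OF i i] by simp
    finally have "cnj (lam i) = of_real ((s i)^2)" using ips by simp
    thus ?thesis by (metis complex_cnj_cnj complex_cnj_complex_of_real)
  qed
  define P where "P = mat d d (\<lambda>(r,c). \<Sum>i<d. of_real (s i) * w i r * cnj (w i c))"
  have Pc: "P \<in> carrier_mat d d" unfolding P_def by simp
  have P2: "mv d P x r = (\<Sum>i<d. (of_real (s i) * ip d x (w i)) * w i r)" if r: "r<d" for x r
  proof -
    have "mv d P x r = (\<Sum>c<d. \<Sum>i<d. of_real (s i) * w i r * cnj (w i c) * x c)"
      unfolding mv_def P_def using r by (simp add: sum_distrib_right)
    also have "\<dots> = (\<Sum>i<d. \<Sum>c<d. of_real (s i) * w i r * cnj (w i c) * x c)" by (rule sum.swap)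
    also have "\<dots> = (\<Sum>i<d. (of_real (s i) * ip d x (w i)) * w i r)"
      unfolding ip_def sum_distrib_left sum_distrib_right by (simp add: ac_simps)
    finally show ?thesis .
  qed
  have P3: "mv d P (w j) r = of_real (s j) * w j r" if j: "j<d" and r: "r<d" for j r
  proof -
    have "mv d P (w j) r = (\<Sum>i<d. if i = j then of_real (s j) * w j r else 0)"
      unfolding P2[OF r] using j by (intro sum.cong) (auto simp: wo)
    thus ?thesis using j by simp
  qed
  have P4: "mat_adjoint P = P"
  proof (rule eq_matI)
    fix r c assume rc: "r < dim_row P" "c < dim_col P"
    hence rc': "r<d" "c<d" using Pc by auto
    have rc2: "r < dim_col P" "c < dim_row P" using Pc rc' by auto
    show "mat_adjoint P $$ (r,c) = P $$ (r,c)"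
      unfolding adj_entry[OF rc2] using rc' unfolding P_def by (simp add: cnj_sum ac_simps)
  qed (use Pc in auto)
  have P5: "0 \<le> ip d (mv d P x) x" for x
  proof -
    have "ip d (mv d P x) x = ip d (\<lambda>r. \<Sum>i<d. (of_real (s i) * ip d x (w i)) * w i r) x"
      by (rule ip_cong) (auto simp: P2)
    also have "\<dots> = (\<Sum>i<d. of_real (s i) * (ip d x (w i) * cnj (ip d x (w i))))"
      unfolding ip_sum_l ip_scale_l
    proof (rule sum.cong[OF refl])
      fix i
      have "ip d (w i) x = cnj (ip d x (w i))" using ip_cnj[of d x "w i"] by simp
      thus "of_real (s i) * ip d x (w i) * ip d (w i) x = of_real (s i) * (ip d x (w i) * cnj (ip d x (w i)))"
        by simp
    qed
    also have "\<dots> = of_real (\<Sum>i<d. s i * (cmod (ip d x (w i)))^2)"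
      unfolding of_real_sum of_real_mult by (simp only: complex_norm_square)
    finally have e: "ip d (mv d P x) x = of_real (\<Sum>i<d. s i * (cmod (ip d x (w i)))^2)" .
    have "0 \<le> (\<Sum>i<d. s i * (cmod (ip d x (w i)))^2)" using s0 by (intro sum_nonneg) simp
    thus ?thesis unfolding e cle_real .
  qed
  have P6: "P * P = M"
  proof (rule mat_eq_by_basis[OF o _ Mc])
    show "P * P \<in> carrier_mat d d" using Pc by simp
    fix i r assume i: "i<d" and r: "r<d"
    have "mv d (P * P) (w i) r = mv d P (mv d P (w i)) r" by (rule mv_mult[OF Pc Pc r])
    also have "\<dots> = mv d P (\<lambda>r. of_real (s i) * w i r) r" by (rule mv_cong) (use P3 i in auto)
    also have "\<dots> = of_real ((s i)^2) * w i r" unfolding mv_scale P3[OF i r] by (simp add: power2_eq_square)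
    also have "\<dots> = mv d M (w i) r" using ev lam i r by simp
    finally show "mv d (P * P) (w i) r = mv d M (w i) r" .
  qed
  have uniq: "Q = P" if Q: "Q \<in> carrier_mat d d" "psd Q" "Q * Q = M" for Q
  proof (rule mat_eq_by_basis[OF o Q(1) Pc])
    have hQ: "hm d Q" using psd_fun[OF Q(2,1)] by simp
    have pQ: "\<And>x. 0 \<le> ip d (mv d Q x) x" using psd_fun[OF Q(2,1)] by simp
    have QQ: "mv d Q (mv d Q y) r = mv d M y r" if "r<d" for y r
      using mv_mult[OF Q(1) Q(1) that] Q(3) by simp
    fix i r assume i: "i<d" and r: "r<d"
    show "mv d Q (w i) r = mv d P (w i) r"
    proof (cases "s i = 0")
      case True
      have "ip d (mv d Q (w i)) (mv d Q (w i)) = ip d (w i) (mv d Q (mv d Q (w i)))" by (rule hm_adj[OF hQ])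
      also have "\<dots> = ip d (w i) (\<lambda>r. lam i * w i r)" by (rule ip_cong) (use QQ ev i in auto)
      also have "\<dots> = 0" unfolding ip_scale_r using lam[OF i] True by simp
      finally have "mv d Q (w i) r = 0" using ip_self_zero r by blast
      thus ?thesis using P3[OF i r] True by simp
    next
      case False
      hence sp: "s i > 0" using s0 by (metis less_eq_real_def)
      define u where "u = (\<lambda>r. mv d Q (w i) r - of_real (s i) * w i r)"
      have "mv d Q u r = - of_real (s i) * u r" if r: "r<d" for r
        unfolding u_def mv_diff mv_scale QQ[OF r] using ev i r lam[OF i]
        by (simp add: algebra_simps power2_eq_square)
      hence "ip d (mv d Q u) u = ip d (\<lambda>r. - of_real (s i) * u r) u" by (intro ip_cong) auto
      also have "\<dots> = - of_real (s i) * ip d u u" by (rule ip_scale_l)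
      finally have e1: "ip d (mv d Q u) u = - of_real (s i) * ip d u u" .
      have e2: "ip d u u = complex_of_real (Re (ip d u u))" using ip_self_ge(2)[of d u] by (simp add: complex_eq_iff)
      have "ip d (mv d Q u) u = complex_of_real (- s i * Re (ip d u u))"
        unfolding e1 by (subst e2) simp
      hence "0 \<le> - s i * Re (ip d u u)" using pQ[of u] cle_real by metis
      hence "Re (ip d u u) \<le> 0" using sp by (simp add: mult_le_0_iff)
      hence "Re (ip d u u) = 0" using ip_self_ge(1)[of d u] by simp
      hence "ip d u u = 0" using ip_self_ge(2)[of d u] by (simp add: complex_eq_iff)
      hence "u r = 0" using ip_self_zero r by blast
      thus ?thesis unfolding u_def using P3[OF i r] by simp
    qed
  qed
  have psdP: "psd P" using psd_from_fun[OF Pc P4 P5] .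
  have "mat_abs X = P"
    unfolding mat_abs_def
  proof (rule the_equality)
    show "P \<in> carrier_mat (dim_col X) (dim_col X) \<and> psd P \<and> P * P = mat_adjoint X * X"
      using Pc psdP P6 X unfolding M_def by simp
    fix Q assume "Q \<in> carrier_mat (dim_col X) (dim_col X) \<and> psd Q \<and> Q * Q = mat_adjoint X * X"
    thus "Q = P" using uniq X unfolding M_def by auto
  qed
  moreover have "mTr P = of_real (\<Sum>i<d. s i)"
  proof -
    have "mTr P = (\<Sum>r<d. \<Sum>i<d. of_real (s i) * (w i r * cnj (w i r)))"
      unfolding mTr_def P_def by (simp add: ac_simps)
    also have "\<dots> = (\<Sum>i<d. \<Sum>r<d. of_real (s i) * (w i r * cnj (w i r)))" by (rule sum.swap)
    also have "\<dots> = (\<Sum>i<d. of_real (s i) * ip d (w i) (w i))" unfolding ip_def sum_distrib_left ..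
    also have "\<dots> = (\<Sum>i<d. of_real (s i))" using wo by simp
    finally show ?thesis by simp
  qed
  ultimately show ?thesis using o s0 ips Pc by auto
qed


definition prodL :: "nat \<Rightarrow> (nat \<Rightarrow> complex mat) \<Rightarrow> nat list \<Rightarrow> complex mat" where
  "prodL d \<psi> L = foldr (\<lambda>i M. \<psi> i * M) L (1\<^sub>m d)"

lemma prodL_simps[simp]: "prodL d \<psi> [] = 1\<^sub>m d" "prodL d \<psi> (a # L) = \<psi> a * prodL d \<psi> L"
  by (simp_all add: prodL_def)

lemma smult_smult_m: "a \<cdot>\<^sub>m (b \<cdot>\<^sub>m A) = (a * b :: complex) \<cdot>\<^sub>m A"
  by (rule eq_matI) auto

lemma one_smult_m[simp]: "(1::complex) \<cdot>\<^sub>m A = A"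
  by (rule eq_matI) auto

lemma adj_mult: fixes A B :: "complex mat" assumes "A \<in> carrier_mat m k" "B \<in> carrier_mat k n"
  shows "mat_adjoint (A * B) = mat_adjoint B * mat_adjoint A"
proof (rule eq_matI)
  fix i j assume ij: "i < dim_row (mat_adjoint B * mat_adjoint A)" "j < dim_col (mat_adjoint B * mat_adjoint A)"
  hence ij': "i < n" "j < m" using assms by auto
  have "mat_adjoint (A * B) $$ (i,j) = cnj ((A*B) $$ (j,i))" using ij' assms by (intro adj_entry) auto
  also have "\<dots> = (\<Sum>t<k. cnj (A $$ (j,t)) * cnj (B $$ (t,i)))"
    using ij' assms by (simp add: scalar_prod_def atLeast0LessThan cnj_sum)
  also have "\<dots> = (mat_adjoint B * mat_adjoint A) $$ (i,j)"
    using ij' assms by (auto simp: scalar_prod_def atLeast0LessThan adj_entry adj_carrier mult.commute intro!: sum.cong)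
  finally show "mat_adjoint (A * B) $$ (i,j) = (mat_adjoint B * mat_adjoint A) $$ (i,j)" .
qed (use assms in auto)

lemma adj_smult: "mat_adjoint (c \<cdot>\<^sub>m A) = cnj c \<cdot>\<^sub>m mat_adjoint A"
  by (rule eq_matI) (auto simp: adj_entry)

lemma adj_one: "mat_adjoint (1\<^sub>m d :: complex mat) = 1\<^sub>m d"
  by (rule eq_matI) (auto simp: adj_entry)

context
  fixes n d :: nat and \<psi> :: "nat \<Rightarrow> complex mat"
  assumes maj: "majorana n d \<psi>"
begin

lemma psi_carrier: "i < n \<Longrightarrow> \<psi> i \<in> carrier_mat d d"
  using maj unfolding majorana_def by auto

lemma psi_adj: "i < n \<Longrightarrow> mat_adjoint (\<psi> i) = \<psi> i"
  using maj unfolding majorana_def hermitian_def by auto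

lemma psi_anti: assumes "a < n" "b < n" "a \<noteq> b"
  shows "\<psi> b * \<psi> a = (-1) \<cdot>\<^sub>m (\<psi> a * \<psi> b)"
proof -
  have H: "\<psi> b * \<psi> a + \<psi> a * \<psi> b = 0 \<cdot>\<^sub>m 1\<^sub>m d" using maj assms unfolding majorana_def by auto
  have ca: "\<psi> a \<in> carrier_mat d d" and cb: "\<psi> b \<in> carrier_mat d d" using psi_carrier assms by auto
  show ?thesis
  proof (rule eq_matI)
    fix i j assume "i < dim_row ((-1) \<cdot>\<^sub>m (\<psi> a * \<psi> b))" "j < dim_col ((-1) \<cdot>\<^sub>m (\<psi> a * \<psi> b))"
    hence ij: "i < d" "j < d" using ca cb by auto
    have "(\<psi> b * \<psi> a + \<psi> a * \<psi> b) $$ (i,j) = 0" unfolding H using ij by simp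
    hence "(\<psi> b * \<psi> a) $$ (i,j) + (\<psi> a * \<psi> b) $$ (i,j) = 0" using ij ca cb
      by (subst index_add_mat(1)[symmetric]) auto
    thus "(\<psi> b * \<psi> a) $$ (i,j) = ((-1) \<cdot>\<^sub>m (\<psi> a * \<psi> b)) $$ (i,j)"
      using ij ca cb by (simp add: eq_neg_iff_add_eq_0)
  qed (use ca cb in auto)
qed

lemma prodL_carrier: "set L \<subseteq> {..<n} \<Longrightarrow> prodL d \<psi> L \<in> carrier_mat d d"
  by (induction L) (auto intro!: mult_carrier_mat psi_carrier)

lemma prodL_snoc: "set L \<subseteq> {..<n} \<Longrightarrow> a < n \<Longrightarrow> prodL d \<psi> (L @ [a]) = prodL d \<psi> L * \<psi> a"
proof (induction L)
  case Nil thus ?case using psi_carrier[of a] by (simp add: left_mult_one_mat right_mult_one_mat)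
next
  case (Cons b L)
  hence "prodL d \<psi> ((b # L) @ [a]) = \<psi> b * (prodL d \<psi> L * \<psi> a)" by simp
  also have "\<dots> = (\<psi> b * prodL d \<psi> L) * \<psi> a"
    using Cons.prems psi_carrier prodL_carrier by (intro assoc_mult_mat[symmetric]) auto
  finally show ?case by simp
qed

lemma prodL_adj: "set L \<subseteq> {..<n} \<Longrightarrow> mat_adjoint (prodL d \<psi> L) = prodL d \<psi> (rev L)"
proof (induction L)
  case Nil thus ?case by (simp add: adj_one)
next
  case (Cons a L)
  have "mat_adjoint (prodL d \<psi> (a # L)) = mat_adjoint (prodL d \<psi> L) * mat_adjoint (\<psi> a)"
    using Cons.prems by (simp add: adj_mult[OF psi_carrier prodL_carrier])
  also have "\<dots> = prodL d \<psi> (rev L) * \<psi> a" using Cons psi_adj by simp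
  also have "\<dots> = prodL d \<psi> (rev (a # L))" using Cons.prems by (simp add: prodL_snoc)
  finally show ?case .
qed

lemma prodL_anti: "set L \<subseteq> {..<n} \<Longrightarrow> a < n \<Longrightarrow> a \<notin> set L \<Longrightarrow>
   prodL d \<psi> L * \<psi> a = ((-1) ^ length L) \<cdot>\<^sub>m (\<psi> a * prodL d \<psi> L)"
proof (induction L)
  case Nil thus ?case using psi_carrier[of a] by (simp add: left_mult_one_mat right_mult_one_mat)
next
  case (Cons b L)
  have ca: "\<psi> a \<in> carrier_mat d d" and cb: "\<psi> b \<in> carrier_mat d d" and cL: "prodL d \<psi> L \<in> carrier_mat d d"
    using Cons.prems psi_carrier prodL_carrier by auto
  have ba: "\<psi> b * \<psi> a = (-1) \<cdot>\<^sub>m (\<psi> a * \<psi> b)" using psi_anti[of a b] Cons.prems by auto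
  have as1: "\<psi> b * (\<psi> a * prodL d \<psi> L) = (\<psi> b * \<psi> a) * prodL d \<psi> L"
    using ca cb cL by (intro assoc_mult_mat[symmetric]) auto
  have as2: "\<psi> a * (\<psi> b * prodL d \<psi> L) = (\<psi> a * \<psi> b) * prodL d \<psi> L"
    using ca cb cL by (intro assoc_mult_mat[symmetric]) auto
  have "prodL d \<psi> (b # L) * \<psi> a = \<psi> b * (prodL d \<psi> L * \<psi> a)"
    using ca cb cL by simp
  also have "\<dots> = \<psi> b * (((-1) ^ length L) \<cdot>\<^sub>m (\<psi> a * prodL d \<psi> L))" using Cons by simp
  also have "\<dots> = ((-1) ^ length L) \<cdot>\<^sub>m (\<psi> b * (\<psi> a * prodL d \<psi> L))"
    using ca cb cL by (intro mult_smult_distrib[OF cb]) auto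
  also have "\<dots> = ((-1) ^ length L) \<cdot>\<^sub>m (((-1) \<cdot>\<^sub>m (\<psi> a * \<psi> b)) * prodL d \<psi> L)"
    unfolding as1 ba ..
  also have "\<dots> = ((-1) ^ length L) \<cdot>\<^sub>m ((-1) \<cdot>\<^sub>m ((\<psi> a * \<psi> b) * prodL d \<psi> L))"
    using ca cb cL by (subst mult_smult_assoc_mat[of _ d d]) auto
  also have "\<dots> = ((-1) ^ length (b # L)) \<cdot>\<^sub>m (\<psi> a * prodL d \<psi> (b # L))"
    unfolding smult_smult_m as2[symmetric] by simp
  finally show ?case .
qed

definition sg :: "nat \<Rightarrow> complex" where "sg m = (-1) ^ (\<Sum>j<m. j)"

lemma sg_Suc: "sg (Suc m) = sg m * (-1) ^ m"
  by (simp add: sg_def power_add)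

lemma prodL_rev: "distinct L \<Longrightarrow> set L \<subseteq> {..<n} \<Longrightarrow> prodL d \<psi> (rev L) = sg (length L) \<cdot>\<^sub>m prodL d \<psi> L"
proof (induction L)
  case Nil thus ?case by (simp add: sg_def)
next
  case (Cons a L)
  have ca: "\<psi> a \<in> carrier_mat d d" and cL: "prodL d \<psi> L \<in> carrier_mat d d"
    using Cons.prems psi_carrier prodL_carrier by auto
  have "prodL d \<psi> (rev (a # L)) = prodL d \<psi> (rev L) * \<psi> a" using Cons.prems by (simp add: prodL_snoc)
  also have "\<dots> = (sg (length L) \<cdot>\<^sub>m prodL d \<psi> L) * \<psi> a" using Cons by simp
  also have "\<dots> = sg (length L) \<cdot>\<^sub>m (prodL d \<psi> L * \<psi> a)" using ca cL by (simp add: mult_smult_assoc_mat[of _ d d])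
  also have "\<dots> = sg (length L) \<cdot>\<^sub>m (((-1) ^ length L) \<cdot>\<^sub>m (\<psi> a * prodL d \<psi> L))"
    using prodL_anti[of L a] Cons.prems by simp
  also have "\<dots> = sg (length (a # L)) \<cdot>\<^sub>m prodL d \<psi> (a # L)" by (simp add: smult_smult_m sg_Suc)
  finally show ?case .
qed

lemma sg_even: "sg (2 * m) = (-1) ^ m"
proof (induction m)
  case 0 thus ?case by (simp add: sg_def)
next
  case (Suc m)
  have "sg (2 * Suc m) = sg (Suc (Suc (2*m)))" by simp
  also have "\<dots> = sg (2*m) * (-1)^(2*m) * (-1)^(Suc (2*m))" by (simp only: sg_Suc)
  finally have "sg (2 * Suc m) = sg (2*m) * (-1)^(2*m) * (-1)^(Suc (2*m))" .
  thus ?case using Suc by (simp add: power_add power_mult)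
qed

lemma psiI_herm: assumes I: "I \<subseteq> {..<n}" "finite I" and q: "even (card I)"
  shows "psiI d \<psi> I \<in> carrier_mat d d \<and> mat_adjoint (psiI d \<psi> I) = psiI d \<psi> I"
proof -
  define L where "L = sorted_list_of_set I"
  have L: "distinct L" "set L \<subseteq> {..<n}" "length L = card I" using I unfolding L_def by auto
  obtain m where m: "card I = 2 * m" using q by blast
  define \<theta> where "\<theta> = pi * real (card I) / 4"
  have ps: "psiI d \<psi> I = cis \<theta> \<cdot>\<^sub>m prodL d \<psi> L" unfolding psiI_def prodL_def L_def \<theta>_def ..
  have cL: "prodL d \<psi> L \<in> carrier_mat d d" using prodL_carrier L by auto
  have "cis (2 * \<theta>) = (-1) ^ m" unfolding \<theta>_def m
    using DeMoivre[of pi m] by (simp add: mult.commute)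
  hence key: "cnj (cis \<theta>) * sg (card I) = cis \<theta>"
    unfolding m sg_even
    by (metis cis_cnj cis_mult diff_add_cancel mult_2 mult.commute add_uminus_conv_diff)
  have "mat_adjoint (psiI d \<psi> I) = cnj (cis \<theta>) \<cdot>\<^sub>m prodL d \<psi> (rev L)"
    unfolding ps adj_smult prodL_adj[OF L(2)] ..
  also have "\<dots> = cis \<theta> \<cdot>\<^sub>m prodL d \<psi> L"
    unfolding prodL_rev[OF L(1,2)] smult_smult_m L(3) key ..
  finally show ?thesis using cL ps by simp
qed

end


lemma mv_delta: "c < d \<Longrightarrow> mv d A (\<lambda>t. if t = c then 1 else 0) r = A $$ (r,c)"
proof -
  assume c: "c<d"
  have "mv d A (\<lambda>t. if t = c then 1 else 0) r = (\<Sum>t<d. if t = c then A $$ (r,c) else 0)"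
    unfolding mv_def by (rule sum.cong) auto
  thus ?thesis using c by simp
qed

lemma ip_delta_r: "c < d \<Longrightarrow> ip d x (\<lambda>t. if t = c then 1 else 0) = x c"
proof -
  assume c: "c<d"
  have "ip d x (\<lambda>t. if t = c then 1 else 0) = (\<Sum>t<d. if t = c then x c else 0)"
    unfolding ip_def by (rule sum.cong) auto
  thus ?thesis using c by simp
qed

lemma mv_add: "mv d A (\<lambda>r. x r + y r) r = mv d A x r + mv d A y r"
  unfolding mv_def distrib_left by (rule sum.distrib)

lemma density_entry: assumes rho: "density d \<rho>" and i: "i<d" and j: "j<d"
  shows "cmod (\<rho> $$ (i,j)) \<le> 1"
proof -
  have rc: "\<rho> \<in> carrier_mat d d" and ps: "psd \<rho>" and tr: "mTr \<rho> = 1" using rho unfolding density_def by auto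
  have h: "hm d \<rho>" and pos: "\<And>x. 0 \<le> ip d (mv d \<rho> x) x" using psd_fun[OF ps rc] by auto
  define e where "e = (\<lambda>c t::nat. if t = c then (1::complex) else 0)"
  have diag: "0 \<le> \<rho> $$ (k,k)" if k: "k<d" for k
  proof -
    have "ip d (mv d \<rho> (e k)) (e k) = \<rho> $$ (k,k)"
      unfolding e_def ip_delta_r[OF k] mv_delta[OF k] ..
    thus ?thesis using pos[of "e k"] by simp
  qed
  have diagle: "Re (\<rho> $$ (k,k)) \<le> 1" if k: "k<d" for k
  proof -
    have "(\<Sum>t<d. Re (\<rho> $$ (t,t))) = 1" using tr rc unfolding mTr_def by (simp flip: Re_sum)
    moreover have "Re (\<rho> $$ (k,k)) \<le> (\<Sum>t<d. Re (\<rho> $$ (t,t)))"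
      using k diag by (intro member_le_sum) (auto simp: less_eq_complex_def)
    ultimately show ?thesis by simp
  qed
  show ?thesis
  proof (cases "\<rho> $$ (i,j) = 0 \<or> i = j")
    case True
    thus ?thesis
    proof
      assume "i = j"
      hence "\<rho> $$ (i,j) = of_real (Re (\<rho> $$ (i,i)))" using diag[OF i] by (simp add: less_eq_complex_def complex_eq_iff)
      moreover have "0 \<le> Re (\<rho> $$ (i,i))" using diag[OF i] by (simp add: less_eq_complex_def)
      ultimately show ?thesis using diagle[OF i] by simp
    qed simp
  next
    case False
    hence nz: "\<rho> $$ (i,j) \<noteq> 0" and ij: "i \<noteq> j" by auto
    define \<beta> where "\<beta> = - cnj (\<rho> $$ (i,j)) / of_real (cmod (\<rho> $$ (i,j)))"
    define a where "a = \<rho> $$ (i,j)"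
    define m where "m = cmod a"
    have m0: "m \<noteq> 0" using nz unfolding m_def a_def by simp
    have ca: "cnj a * a = of_real (m^2)" unfolding m_def by (metis complex_norm_square mult.commute)
    have b1: "\<beta> * \<rho> $$ (i,j) = - of_real (cmod (\<rho> $$ (i,j)))"
    proof -
      have "\<beta> * \<rho> $$ (i,j) = - (cnj a * a) / of_real m" unfolding \<beta>_def a_def m_def by simp
      also have "\<dots> = - of_real (m^2) / of_real m" unfolding ca ..
      also have "\<dots> = - of_real m" using m0 by (simp add: power2_eq_square)
      finally show ?thesis unfolding m_def a_def .
    qed
    have bb: "\<beta> * cnj \<beta> = 1"
    proof -
      have "\<beta> * cnj \<beta> = (cnj a * a) / (of_real m * of_real m)" unfolding \<beta>_def a_def m_def by simp
      also have "\<dots> = 1" unfolding ca using m0 by (simp add: power2_eq_square)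
      finally show ?thesis .
    qed
    have hji: "\<rho> $$ (j,i) = cnj (\<rho> $$ (i,j))" using h i j unfolding hm_def by blast
    define x where "x = (\<lambda>t. e i t + \<beta> * e j t)"
    have "ip d (mv d \<rho> x) x = ip d (\<lambda>r. \<rho> $$ (r,i) + \<beta> * \<rho> $$ (r,j)) x"
    proof (rule ip_cong)
      fix r assume "r<d"
      have "mv d \<rho> x r = mv d \<rho> (e i) r + \<beta> * mv d \<rho> (e j) r" unfolding x_def mv_add mv_scale ..
      also have "mv d \<rho> (e i) r = \<rho> $$ (r,i)" unfolding e_def by (rule mv_delta[OF i])
      also have "mv d \<rho> (e j) r = \<rho> $$ (r,j)" unfolding e_def by (rule mv_delta[OF j])
      finally show "mv d \<rho> x r = \<rho> $$ (r,i) + \<beta> * \<rho> $$ (r,j)" .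
    qed simp
    also have "\<dots> = (\<rho> $$ (i,i) + \<beta> * \<rho> $$ (i,j)) + cnj \<beta> * (\<rho> $$ (j,i) + \<beta> * \<rho> $$ (j,j))"
      unfolding x_def ip_add_r ip_scale_r e_def ip_delta_r[OF i] ip_delta_r[OF j] ..
    also have "\<dots> = \<rho> $$ (i,i) + (\<beta> * cnj \<beta>) * \<rho> $$ (j,j) + \<beta> * \<rho> $$ (i,j) + cnj (\<beta> * \<rho> $$ (i,j))"
      unfolding hji complex_cnj_mult by (simp add: algebra_simps)
    also have "\<dots> = \<rho> $$ (i,i) + \<rho> $$ (j,j) + \<beta> * \<rho> $$ (i,j) + cnj (\<beta> * \<rho> $$ (i,j))"
      unfolding bb by simp
    also have "\<dots> = \<rho> $$ (i,i) + \<rho> $$ (j,j) - 2 * of_real (cmod (\<rho> $$ (i,j)))"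
      unfolding b1 by simp
    finally have "0 \<le> \<rho> $$ (i,i) + \<rho> $$ (j,j) - 2 * of_real (cmod (\<rho> $$ (i,j)))" using pos[of x] by simp
    hence "2 * cmod (\<rho> $$ (i,j)) \<le> Re (\<rho> $$ (i,i)) + Re (\<rho> $$ (j,j))" by (simp add: less_eq_complex_def)
    thus ?thesis using diagle[OF i] diagle[OF j] by simp
  qed
qed

lemma trace_bound: assumes rho: "density d \<rho>" and A: "A \<in> carrier_mat d d"
  shows "cmod (mTr (A * \<rho>)) \<le> (\<Sum>r<d. \<Sum>k<d. cmod (A $$ (r,k)))"
proof -
  have rc: "\<rho> \<in> carrier_mat d d" using rho unfolding density_def by auto
  have tr: "mTr (A * \<rho>) = (\<Sum>r<d. \<Sum>k<d. A $$ (r,k) * \<rho> $$ (k,r))"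
    unfolding mTr_def using A rc by (simp add: row_col)
  have "cmod (mTr (A * \<rho>)) \<le> (\<Sum>r<d. \<Sum>k<d. cmod (A $$ (r,k) * \<rho> $$ (k,r)))"
    unfolding tr by (rule order_trans[OF norm_sum], intro sum_mono norm_sum)
  also have "\<dots> \<le> (\<Sum>r<d. \<Sum>k<d. cmod (A $$ (r,k)))"
  proof (intro sum_mono)
    fix r k assume "r \<in> {..<d}" "k \<in> {..<d}"
    hence "cmod (\<rho> $$ (k,r)) \<le> 1" using density_entry[OF rho] by auto
    thus "cmod (A $$ (r,k) * \<rho> $$ (k,r)) \<le> cmod (A $$ (r,k))"
      by (simp add: norm_mult mult_left_le)
  qed
  finally show ?thesis .
qed


lemma real_pol: fixes p m :: "'i \<Rightarrow> real"
  assumes fin: "finite S" and a: "0 \<le> a" and b: "0 \<le> b" and K: "0 \<le> K"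
    and hp: "(\<Sum>I\<in>S. (p I)^2) \<le> K * a^2" and hm: "(\<Sum>I\<in>S. (m I)^2) \<le> K * b^2"
  shows "(\<Sum>I\<in>S. (p I - m I)^2) \<le> K * (a + b)^2"
proof -
  consider "a = 0" | "b = 0" | "a > 0 \<and> b > 0" using a b by linarith
  thus ?thesis
  proof cases
    case 1
    hence "(\<Sum>I\<in>S. (p I)^2) = 0" using hp by (simp add: sum_nonneg antisym)
    hence "\<forall>I\<in>S. (p I)^2 = 0" using fin by (subst sum_nonneg_eq_0_iff[symmetric]) auto
    hence "(\<Sum>I\<in>S. (p I - m I)^2) = (\<Sum>I\<in>S. (m I)^2)" by (intro sum.cong) auto
    thus ?thesis using hm 1 by simp
  next
    case 2
    hence "(\<Sum>I\<in>S. (m I)^2) = 0" using hm by (simp add: sum_nonneg antisym)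
    hence "\<forall>I\<in>S. (m I)^2 = 0" using fin by (subst sum_nonneg_eq_0_iff[symmetric]) auto
    hence "(\<Sum>I\<in>S. (p I - m I)^2) = (\<Sum>I\<in>S. (p I)^2)" by (intro sum.cong) auto
    thus ?thesis using hp 2 by simp
  next
    case 3
    have pt: "(x - y)^2 \<le> (a + b) * (x^2 / a + y^2 / b)" for x y
    proof -
      have "(a+b)*(b*x^2 + a*y^2) - a*b*(x-y)^2 = (b*x + a*y)^2" by (simp add: power2_eq_square algebra_simps)
      hence "a*b*(x-y)^2 \<le> (a+b)*(b*x^2 + a*y^2)" by (metis diff_ge_0_iff_ge zero_le_power2)
      moreover have "(a + b) * (x^2 / a + y^2 / b) = (a+b)*(b*x^2 + a*y^2) / (a*b)"
        using 3 by (simp add: field_simps)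
      ultimately show ?thesis using 3 by (simp add: field_simps)
    qed
    have "(\<Sum>I\<in>S. (p I - m I)^2) \<le> (\<Sum>I\<in>S. (a + b) * ((p I)^2 / a + (m I)^2 / b))"
      by (intro sum_mono pt)
    also have "\<dots> = (a+b) * ((\<Sum>I\<in>S. (p I)^2) / a + (\<Sum>I\<in>S. (m I)^2) / b)"
      by (simp add: sum_distrib_left sum.distrib distrib_left sum_divide_distrib)
    also have "\<dots> \<le> (a+b) * (K * a^2 / a + K * b^2 / b)"
      using 3 hp hm by (intro mult_left_mono add_mono divide_right_mono) auto
    also have "\<dots> = K * (a+b)^2" using 3 by (simp add: power2_eq_square field_simps)
    finally show ?thesis .
  qed
qed

context
  fixes n q d :: nat and \<psi> :: "nat \<Rightarrow> complex mat"
  assumes maj: "majorana n d \<psi>" and qe: "even q" and dpos: "0 < d"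
begin

abbreviation "SS \<equiv> subsets_q n q"
abbreviation "Cq \<equiv> real (n choose q)"
abbreviation "Dl \<equiv> comm_index n q d \<psi>"
abbreviation "AI I \<equiv> psiI d \<psi> I"

lemma SS_fin: "finite SS"
  unfolding subsets_q_def by (rule finite_subset[of _ "Pow {0..<n}"]) auto

lemma SS_card: "card SS = n choose q"
  unfolding subsets_q_def using n_subsets[of "{0..<n}" q] by simp

lemma SS_herm: assumes "I \<in> SS" shows "AI I \<in> carrier_mat d d" "hm d (AI I)"
proof -
  have I: "I \<subseteq> {..<n}" "finite I" "even (card I)" using assms qe unfolding subsets_q_def
    by (auto simp: finite_subset)
  have h: "AI I \<in> carrier_mat d d \<and> mat_adjoint (AI I) = AI I" using psiI_herm[OF maj I] .
  thus "AI I \<in> carrier_mat d d" by simp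
  show "hm d (AI I)" unfolding hm_def
  proof (intro allI impI)
    fix i j assume ij: "i<d" "j<d"
    have "mat_adjoint (AI I) $$ (i,j) = cnj (AI I $$ (j,i))" using h ij by (intro adj_entry) auto
    thus "AI I $$ (i,j) = cnj (AI I $$ (j,i))" using h by simp
  qed
qed

lemma bdd: "bdd_above {(1 / Cq) * (\<Sum>I\<in>SS. Re ((mTr (AI I * \<rho>))\<^sup>2)) | \<rho>. density d \<rho>}"
proof (rule bdd_aboveI)
  fix x assume "x \<in> {(1 / Cq) * (\<Sum>I\<in>SS. Re ((mTr (AI I * \<rho>))\<^sup>2)) | \<rho>. density d \<rho>}"
  then obtain \<rho> where x: "x = (1 / Cq) * (\<Sum>I\<in>SS. Re ((mTr (AI I * \<rho>))\<^sup>2))" and rho: "density d \<rho>" by auto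
  have "(\<Sum>I\<in>SS. Re ((mTr (AI I * \<rho>))\<^sup>2)) \<le> (\<Sum>I\<in>SS. (\<Sum>r<d. \<Sum>k<d. cmod (AI I $$ (r,k)))^2)"
  proof (rule sum_mono)
    fix I assume I: "I \<in> SS"
    have "Re ((mTr (AI I * \<rho>))\<^sup>2) \<le> cmod ((mTr (AI I * \<rho>))\<^sup>2)" by (rule complex_Re_le_cmod)
    also have "\<dots> = (cmod (mTr (AI I * \<rho>)))^2" by (simp add: norm_power)
    also have "\<dots> \<le> (\<Sum>r<d. \<Sum>k<d. cmod (AI I $$ (r,k)))^2"
      using trace_bound[OF rho SS_herm(1)[OF I]] by (intro power_mono) auto
    finally show "Re ((mTr (AI I * \<rho>))\<^sup>2) \<le> (\<Sum>r<d. \<Sum>k<d. cmod (AI I $$ (r,k)))^2" .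
  qed
  thus "x \<le> (1 / Cq) * (\<Sum>I\<in>SS. (\<Sum>r<d. \<Sum>k<d. cmod (AI I $$ (r,k)))^2)"
    unfolding x by (intro mult_left_mono) auto
qed

lemma PS: assumes y: "ip d y y = 1"
  shows "(1 / Cq) * (\<Sum>I\<in>SS. (Re (ip d (mv d (AI I) y) y))^2) \<le> Dl"
proof -
  define \<rho> where "\<rho> = mat d d (\<lambda>(i,j). y i * cnj (y j))"
  have rc: "\<rho> \<in> carrier_mat d d" unfolding \<rho>_def by simp
  have adj: "mat_adjoint \<rho> = \<rho>"
    by (rule eq_matI) (auto simp: \<rho>_def adj_entry)
  have mvr: "mv d \<rho> x r = ip d x y * y r" if "r<d" for x r
    unfolding mv_def ip_def \<rho>_def using that by (simp add: sum_distrib_left sum_distrib_right ac_simps)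
  have pos: "0 \<le> ip d (mv d \<rho> x) x" for x
  proof -
    have "ip d (mv d \<rho> x) x = ip d (\<lambda>r. ip d x y * y r) x" by (rule ip_cong) (auto simp: mvr)
    also have "\<dots> = ip d x y * cnj (ip d x y)" unfolding ip_scale_l using ip_cnj[of d x y] by simp
    also have "\<dots> = of_real ((cmod (ip d x y))^2)" by (simp only: complex_norm_square)
    finally have e: "ip d (mv d \<rho> x) x = of_real ((cmod (ip d x y))^2)" .
    show ?thesis unfolding e cle_real by simp
  qed
  have tr1: "mTr \<rho> = 1" using y unfolding mTr_def ip_def \<rho>_def by simp
  have dens: "density d \<rho>" unfolding density_def using rc psd_from_fun[OF rc adj pos] tr1 by simp
  have trA: "Re ((mTr (AI I * \<rho>))\<^sup>2) = (Re (ip d (mv d (AI I) y) y))^2" if I: "I \<in> SS" for I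
  proof -
    have Ac: "AI I \<in> carrier_mat d d" and h: "hm d (AI I)" using SS_herm[OF I] by auto
    have "mTr (AI I * \<rho>) = (\<Sum>r<d. \<Sum>k<d. AI I $$ (r,k) * (y k * cnj (y r)))"
      unfolding mTr_def using Ac rc by (simp add: row_col) (simp add: \<rho>_def)
    also have "\<dots> = ip d (mv d (AI I) y) y"
      unfolding ip_def mv_def sum_distrib_right by (simp add: ac_simps)
    finally have e: "mTr (AI I * \<rho>) = ip d (mv d (AI I) y) y" .
    have "cnj (ip d (mv d (AI I) y) y) = ip d (mv d (AI I) y) y"
      unfolding ip_cnj hm_adj[OF h] ..
    hence "Im (ip d (mv d (AI I) y) y) = 0" by (metis Reals_cnj_iff complex_is_Real_iff)
    thus ?thesis unfolding e by (simp add: power2_eq_square)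
  qed
  have "(1 / Cq) * (\<Sum>I\<in>SS. (Re (ip d (mv d (AI I) y) y))^2) = (1 / Cq) * (\<Sum>I\<in>SS. Re ((mTr (AI I * \<rho>))\<^sup>2))"
    using trA by simp
  also have "\<dots> \<le> Dl" unfolding comm_index_def
    by (rule cSup_upper[OF _ bdd]) (use dens in blast)
  finally show ?thesis .
qed

lemma Dl_nonneg: "0 \<le> Dl"
proof -
  define e where "e = (\<lambda>t::nat. if t = 0 then (1::complex) else 0)"
  have "ip d e e = 1" unfolding e_def using ip_delta_r[OF dpos] by simp
  from PS[OF this] show ?thesis by (rule order_trans[rotated]) (intro mult_nonneg_nonneg sum_nonneg; simp)
qed

end


lemma L2_sum: assumes "finite K"
  shows "L2_set (\<lambda>I. \<Sum>i\<in>K. f i I) S \<le> (\<Sum>i\<in>K. L2_set (f i) S)"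
  using assms
proof (induction K rule: finite_induct)
  case empty thus ?case by (simp add: L2_set_def)
next
  case (insert k K)
  have "L2_set (\<lambda>I. \<Sum>i\<in>insert k K. f i I) S = L2_set (\<lambda>I. f k I + (\<Sum>i\<in>K. f i I)) S"
    using insert by simp
  also have "\<dots> \<le> L2_set (f k) S + L2_set (\<lambda>I. \<Sum>i\<in>K. f i I) S" by (rule L2_set_triangle_ineq)
  also have "\<dots> \<le> L2_set (f k) S + (\<Sum>i\<in>K. L2_set (f i) S)" using insert by simp
  finally show ?case using insert by simp
qed

lemma mink: fixes z :: "'a \<Rightarrow> 'b \<Rightarrow> complex" assumes S: "finite S" and K: "finite K"
  shows "(\<Sum>I\<in>S. (cmod (\<Sum>i\<in>K. z I i))^2) \<le> (\<Sum>i\<in>K. sqrt (\<Sum>I\<in>S. (cmod (z I i))^2))^2"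
proof -
  have "L2_set (\<lambda>I. cmod (\<Sum>i\<in>K. z I i)) S \<le> L2_set (\<lambda>I. \<Sum>i\<in>K. cmod (z I i)) S"
    by (rule L2_set_mono) (auto intro: norm_sum)
  also have "\<dots> \<le> (\<Sum>i\<in>K. L2_set (\<lambda>I. cmod (z I i)) S)" by (rule L2_sum[OF K])
  finally have "L2_set (\<lambda>I. cmod (\<Sum>i\<in>K. z I i)) S \<le> (\<Sum>i\<in>K. sqrt (\<Sum>I\<in>S. (cmod (z I i))^2))"
    unfolding L2_set_def .
  hence "(L2_set (\<lambda>I. cmod (\<Sum>i\<in>K. z I i)) S)^2 \<le> (\<Sum>i\<in>K. sqrt (\<Sum>I\<in>S. (cmod (z I i))^2))^2"
    by (intro power_mono) auto
  thus ?thesis unfolding L2_set_def by (simp add: sum_nonneg)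
qed

context
  fixes n q d :: nat and \<psi> :: "nat \<Rightarrow> complex mat"
  assumes maj: "majorana n d \<psi>" and qe: "even q" and dpos: "0 < d"
begin

abbreviation "SSx \<equiv> subsets_q n q"
abbreviation "Cqx \<equiv> real (n choose q)"
abbreviation "Dlx \<equiv> comm_index n q d \<psi>"
abbreviation "AIx I \<equiv> psiI d \<psi> I"

lemmas SSfin = SS_fin[OF maj qe dpos]
lemmas SScard = SS_card[OF maj qe dpos]
lemmas SSherm = SS_herm[OF maj qe dpos]
lemmas PS1 = PS[OF maj qe dpos]
lemmas Dl0 = Dl_nonneg[OF maj qe dpos]

lemma KK0: "0 \<le> Cqx * Dlx" using Dl0 by simp

lemma PSg: "(\<Sum>I\<in>SSx. (Re (ip d (mv d (AIx I) y) y))^2) \<le> Cqx * Dlx * (Re (ip d y y))^2"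
proof (cases "ip d y y = 0")
  case True
  hence y0: "\<forall>r<d. y r = 0" using ip_self_zero by blast
  hence "ip d (mv d (AIx I) y) y = 0" for I unfolding ip_def by simp
  thus ?thesis using True by simp
next
  case False
  define nn where "nn = Re (ip d y y)"
  have e: "ip d y y = of_real nn" using ip_self_ge(2)[of d y] unfolding nn_def by (simp add: complex_eq_iff)
  have nnp: "nn > 0" using False e ip_self_ge(1)[of d y] nn_def by (metis less_eq_real_def of_real_0)
  define c where "c = complex_of_real (1 / sqrt (Re (ip d y y)))"
  have cc: "c * cnj c = of_real (1 / nn)" unfolding c_def nn_def[symmetric] using nnp
    by (simp flip: of_real_mult)
  have y1: "ip d (\<lambda>r. c * y r) (\<lambda>r. c * y r) = 1" unfolding c_def by (rule normalize[OF False])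
  have sc: "Re (ip d (mv d (AIx I) (\<lambda>r. c * y r)) (\<lambda>r. c * y r)) = Re (ip d (mv d (AIx I) y) y) / nn" for I
  proof -
    have "ip d (mv d (AIx I) (\<lambda>r. c * y r)) (\<lambda>r. c * y r) = ip d (\<lambda>r. c * mv d (AIx I) y r) (\<lambda>r. c * y r)"
      by (rule ip_cong) (auto simp: mv_scale)
    also have "\<dots> = (c * cnj c) * ip d (mv d (AIx I) y) y" unfolding ip_scale_l ip_scale_r by simp
    finally show ?thesis unfolding cc by simp
  qed
  have "(1 / Cqx) * (\<Sum>I\<in>SSx. (Re (ip d (mv d (AIx I) y) y) / nn)^2) \<le> Dlx"
    using PS1[OF y1] unfolding sc .
  show ?thesis
  proof (cases "Cqx = 0")
    case True
    hence "card SSx = 0" using SScard by simp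
    hence "SSx = {}" using SSfin by simp
    thus ?thesis using KK0 by simp
  next
    case False
    hence Cp: "Cqx > 0" by simp
    have "(\<Sum>I\<in>SSx. (Re (ip d (mv d (AIx I) y) y) / nn)^2) \<le> Cqx * Dlx"
      using \<open>(1 / Cqx) * _ \<le> Dlx\<close> Cp by (simp add: field_simps)
    hence "(\<Sum>I\<in>SSx. (Re (ip d (mv d (AIx I) y) y))^2) / nn^2 \<le> Cqx * Dlx"
      by (simp add: power_divide sum_divide_distrib)
    thus ?thesis unfolding nn_def[symmetric] using nnp by (simp add: field_simps)
  qed
qed

lemma POL: "(\<Sum>I\<in>SSx. (Re (ip d (mv d (AIx I) u) v))^2) \<le> Cqx * Dlx * (Re (ip d v v) + Re (ip d u u))^2 / 4"
proof -
  define vp where "vp = (\<lambda>r. v r + u r)"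
  define vm where "vm = (\<lambda>r. v r - u r)"
  have ident: "Re (ip d (mv d (AIx I) vp) vp) - Re (ip d (mv d (AIx I) vm) vm) = 4 * Re (ip d (mv d (AIx I) u) v)"
    if I: "I \<in> SSx" for I
  proof -
    have h: "hm d (AIx I)" using SSherm(2)[OF I] .
    have p: "ip d (mv d (AIx I) vp) vp = ip d (\<lambda>r. mv d (AIx I) v r + mv d (AIx I) u r) vp"
      unfolding vp_def by (rule ip_cong) (auto simp: mv_add)
    have m: "ip d (mv d (AIx I) vm) vm = ip d (\<lambda>r. mv d (AIx I) v r - mv d (AIx I) u r) vm"
      unfolding vm_def by (rule ip_cong) (auto simp: mv_diff)
    have c: "ip d (mv d (AIx I) v) u = cnj (ip d (mv d (AIx I) u) v)"
      unfolding hm_adj[OF h] ip_cnj ..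
    have "ip d (mv d (AIx I) vp) vp - ip d (mv d (AIx I) vm) vm
        = 2 * ip d (mv d (AIx I) v) u + 2 * ip d (mv d (AIx I) u) v"
      unfolding p m unfolding vp_def vm_def ip_add_l ip_add_r ip_diff_l ip_diff_r by (simp add: algebra_simps)
    hence "Re (ip d (mv d (AIx I) vp) vp) - Re (ip d (mv d (AIx I) vm) vm)
        = Re (2 * ip d (mv d (AIx I) v) u + 2 * ip d (mv d (AIx I) u) v)"
      by (metis minus_complex.sel(1))
    thus ?thesis unfolding c by simp
  qed
  have norms: "Re (ip d vp vp) + Re (ip d vm vm) = 2 * (Re (ip d v v) + Re (ip d u u))"
    unfolding vp_def vm_def ip_add_l ip_add_r ip_diff_l ip_diff_r by simp
  have "(\<Sum>I\<in>SSx. (Re (ip d (mv d (AIx I) vp) vp) - Re (ip d (mv d (AIx I) vm) vm))^2)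
        \<le> Cqx * Dlx * (Re (ip d vp vp) + Re (ip d vm vm))^2"
    by (rule real_pol[OF SSfin ip_self_ge(1) ip_self_ge(1) KK0 PSg PSg])
  also have "(\<Sum>I\<in>SSx. (Re (ip d (mv d (AIx I) vp) vp) - Re (ip d (mv d (AIx I) vm) vm))^2)
        = (\<Sum>I\<in>SSx. 16 * (Re (ip d (mv d (AIx I) u) v))^2)"
    by (intro sum.cong) (auto simp: ident power2_eq_square)
  finally have h: "(\<Sum>I\<in>SSx. 16 * (Re (ip d (mv d (AIx I) u) v))^2) \<le> Cqx * Dlx * (2 * (Re (ip d v v) + Re (ip d u u)))^2"
    unfolding norms .
  have e1: "(\<Sum>I\<in>SSx. 16 * (Re (ip d (mv d (AIx I) u) v))^2) = 16 * (\<Sum>I\<in>SSx. (Re (ip d (mv d (AIx I) u) v))^2)"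
    by (simp add: sum_distrib_left)
  have e2: "Cqx * Dlx * (2 * (Re (ip d v v) + Re (ip d u u)))^2 = 4 * (Cqx * Dlx * (Re (ip d v v) + Re (ip d u u))^2)"
    by (simp only: power_mult_distrib) simp
  show ?thesis using h unfolding e1 e2 by simp
qed

lemma POL2: "(\<Sum>I\<in>SSx. (cmod (ip d (mv d (AIx I) u) v))^2) \<le> Cqx * Dlx * (Re (ip d v v) + Re (ip d u u))^2 / 2"
proof -
  define ui where "ui = (\<lambda>r. \<i> * u r)"
  have e1: "ip d (mv d (AIx I) ui) v = \<i> * ip d (mv d (AIx I) u) v" for I
  proof -
    have "ip d (mv d (AIx I) ui) v = ip d (\<lambda>r. \<i> * mv d (AIx I) u r) v"
      unfolding ui_def by (rule ip_cong) (auto simp: mv_scale)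
    thus ?thesis by (simp add: ip_scale_l)
  qed
  have e2: "ip d ui ui = ip d u u" unfolding ui_def ip_scale_l ip_scale_r by simp
  have "(\<Sum>I\<in>SSx. (cmod (ip d (mv d (AIx I) u) v))^2)
      = (\<Sum>I\<in>SSx. (Re (ip d (mv d (AIx I) u) v))^2) + (\<Sum>I\<in>SSx. (Re (ip d (mv d (AIx I) ui) v))^2)"
    unfolding e1 cmod_power2 sum.distrib[symmetric] by (simp add: power2_eq_square)
  also have "\<dots> \<le> Cqx * Dlx * (Re (ip d v v) + Re (ip d u u))^2 / 4 + Cqx * Dlx * (Re (ip d v v) + Re (ip d u u))^2 / 4"
    using POL[of u v] POL[of ui v] unfolding e2 by linarith
  finally show ?thesis by simp
qed

lemma FB: assumes w: "ip d w w = 1" and s: "0 \<le> s" and x: "Re (ip d x x) = s^2"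
  shows "(\<Sum>I\<in>SSx. (cmod (ip d (mv d (AIx I) x) w))^2) \<le> 2 * Cqx * Dlx * s^2"
proof (cases "s = 0")
  case True
  hence "ip d x x = 0" using x ip_self_ge(2)[of d x] by (simp add: complex_eq_iff)
  hence "\<forall>r<d. x r = 0" using ip_self_zero by blast
  hence "mv d (AIx I) x r = 0" for I r unfolding mv_def by simp
  hence "ip d (mv d (AIx I) x) w = 0" for I unfolding ip_def by simp
  thus ?thesis using KK0 by simp
next
  case False
  hence sp: "s > 0" using s by simp
  define v where "v = (\<lambda>r. complex_of_real s * w r)"
  have nv: "Re (ip d v v) = s^2" unfolding v_def ip_scale_l ip_scale_r w by (simp add: power2_eq_square)
  have e: "(cmod (ip d (mv d (AIx I) x) v))^2 = s^2 * (cmod (ip d (mv d (AIx I) x) w))^2" for I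
    unfolding v_def ip_scale_r using s by (simp add: norm_mult power_mult_distrib)
  have "s^2 * (\<Sum>I\<in>SSx. (cmod (ip d (mv d (AIx I) x) w))^2) \<le> Cqx * Dlx * (s^2 + s^2)^2 / 2"
    using POL2[of x v] unfolding e nv x sum_distrib_left .
  also have "\<dots> = s^2 * (2 * Cqx * Dlx * s^2)" by (simp add: power2_eq_square)
  finally show ?thesis using sp by simp
qed

lemma main_d: assumes X: "X \<in> carrier_mat d d"
  shows "(1 / Cqx) * (\<Sum>I\<in>SSx. (cmod (ntr (AIx I * X)))\<^sup>2) \<le> 2 * Dlx * (Re (ntr (mat_abs X)))\<^sup>2"
proof -
  obtain w s where o: "orthon d d w" and s0: "\<forall>i. 0 \<le> s i"
    and ips: "\<forall>i<d. ip d (mv d X (w i)) (mv d X (w i)) = of_real ((s i)^2)"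
    and trP: "mTr (mat_abs X) = of_real (\<Sum>i<d. s i)" and Pc: "mat_abs X \<in> carrier_mat d d"
    using abs_decomp[OF X] by blast
  define z where "z = (\<lambda>I i. ip d (mv d (AIx I) (mv d X (w i))) (w i))"
  define K where "K = Cqx * Dlx"
  have K0: "0 \<le> K" unfolding K_def using KK0 .
  have trz: "mTr (AIx I * X) = (\<Sum>i<d. z I i)" if I: "I \<in> SSx" for I
  proof -
    have Ac: "AIx I \<in> carrier_mat d d" using SSherm(1)[OF I] .
    have "mTr (AIx I * X) = (\<Sum>i<d. ip d (mv d (AIx I * X) (w i)) (w i))"
      by (rule trace_basis[OF o]) (use Ac X in simp)
    also have "\<dots> = (\<Sum>i<d. z I i)" unfolding z_def
      by (intro sum.cong refl ip_cong) (auto simp: mv_mult[OF Ac X])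
    finally show ?thesis .
  qed
  have ntrI: "(cmod (ntr (AIx I * X)))^2 = (cmod (\<Sum>i<d. z I i))^2 / (real d)^2" if I: "I \<in> SSx" for I
  proof -
    have Ac: "AIx I \<in> carrier_mat d d" using SSherm(1)[OF I] .
    have "ntr (AIx I * X) = (\<Sum>i<d. z I i) / of_nat d" unfolding ntr_def trz[OF I] using Ac by simp
    thus ?thesis by (simp add: norm_divide power_divide)
  qed
  have FBi: "(\<Sum>I\<in>SSx. (cmod (z I i))^2) \<le> 2 * K * (s i)^2" if i: "i<d" for i
  proof -
    have w1: "ip d (w i) (w i) = 1" using o i unfolding orthon_def by simp
    have "Re (ip d (mv d X (w i)) (mv d X (w i))) = (s i)^2" using ips i by simp
    from FB[OF w1 _ this] s0 show ?thesis unfolding z_def K_def by (simp add: mult.assoc)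
  qed
  have main: "(\<Sum>I\<in>SSx. (cmod (\<Sum>i<d. z I i))^2) \<le> 2 * K * (\<Sum>i<d. s i)^2"
  proof -
    have "(\<Sum>I\<in>SSx. (cmod (\<Sum>i<d. z I i))^2) \<le> (\<Sum>i<d. sqrt (\<Sum>I\<in>SSx. (cmod (z I i))^2))^2"
      by (rule mink[OF SSfin]) simp
    also have "\<dots> \<le> (\<Sum>i<d. sqrt (2 * K) * s i)^2"
    proof (rule power_mono)
      show "(\<Sum>i<d. sqrt (\<Sum>I\<in>SSx. (cmod (z I i))^2)) \<le> (\<Sum>i<d. sqrt (2 * K) * s i)"
      proof (rule sum_mono)
        fix i assume "i \<in> {..<d}"
        hence "sqrt (\<Sum>I\<in>SSx. (cmod (z I i))^2) \<le> sqrt (2 * K * (s i)^2)" using FBi by simp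
        also have "\<dots> = sqrt (2 * K) * s i" using s0 by (simp add: real_sqrt_mult)
        finally show "sqrt (\<Sum>I\<in>SSx. (cmod (z I i))^2) \<le> sqrt (2 * K) * s i" .
      qed
    qed (intro sum_nonneg; simp add: sum_nonneg)
    also have "\<dots> = 2 * K * (\<Sum>i<d. s i)^2"
      unfolding sum_distrib_left[symmetric] power_mult_distrib using K0 by simp
    finally show ?thesis .
  qed
  have lhs: "(1 / Cqx) * (\<Sum>I\<in>SSx. (cmod (ntr (AIx I * X)))\<^sup>2)
       = (1 / Cqx) * ((\<Sum>I\<in>SSx. (cmod (\<Sum>i<d. z I i))^2) / (real d)^2)"
    using ntrI by (simp add: sum_divide_distrib)
  have rhs: "Re (ntr (mat_abs X)) = (\<Sum>i<d. s i) / real d"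
    unfolding ntr_def trP using Pc by simp
  show ?thesis
  proof (cases "Cqx = 0")
    case True
    hence z: "1 / Cqx = 0" by simp
    show ?thesis unfolding lhs z using Dl0 by simp
  next
    case False
    hence Cp: "Cqx > 0" by simp
    have "(1 / Cqx) * ((\<Sum>I\<in>SSx. (cmod (\<Sum>i<d. z I i))^2) / (real d)^2)
          \<le> (1 / Cqx) * (2 * K * (\<Sum>i<d. s i)^2 / (real d)^2)"
      using main Cp by (intro mult_left_mono divide_right_mono) auto
    also have "\<dots> = 2 * Dlx * (Re (ntr (mat_abs X)))\<^sup>2"
      unfolding rhs K_def using Cp by (simp add: power_divide)
    finally show ?thesis unfolding lhs .
  qed
qed

end

theorem mainTheorem5:
  fixes n q :: nat and \<psi> :: "nat \<Rightarrow> complex mat" and X :: "complex mat"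
  assumes "even n" and "even q"
    and "majorana n (2 ^ (n div 2)) \<psi>"
    and "X \<in> carrier_mat (2 ^ (n div 2)) (2 ^ (n div 2))"
  shows "(1 / real (n choose q)) * (\<Sum>I\<in>subsets_q n q. (cmod (ntr (psiI (2 ^ (n div 2)) \<psi> I * X)))\<^sup>2)
         \<le> 2 * comm_index n q (2 ^ (n div 2)) \<psi> * (Re (ntr (mat_abs X)))\<^sup>2"
proof -
  have dpos: "0 < (2::nat) ^ (n div 2)" by simp
  show ?thesis using main_d[OF assms(3) assms(2) dpos assms(4)] .
qed

end
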